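(* Consider a slotted system with diversity. There are $N$ users, $N_{sub}\ge2$ sub-carriers and slots $1,\dots,T$, where $0<\alpha<1$, $\alpha T\in\mathbb Z$ and $(1-\alpha)T$ is even. The BS uses pmfs $\mathbf p$ on users and $\mathbf q$ on sub-carriers: in every slot, independently, it chooses user $i$ with probability $p_i$ and sub-carrier $j$ with probability $q_j$, and sends an update to the chosen user on the chosen sub-carrier. The adversary uses the strategy $\sigma'$: in each slot $t\in\{\frac{(1-\alpha)T}2+1,\dots,\frac{(1+\alpha)T}2\}$ it blocks one sub-carrier chosen uniformly at random, independently of everything else, and it blocks nothing in other slots. Ages satisfy $a_i(1)=1$, $a_i(t+1)=1$ if user $i$ is chosen in slot $t$ on an unblocked sub-carrier, and $a_i(t+1)=a_i(t)+1$ otherwise. Let $\Delta^{\mathbf p,\mathbf q,\sigma'}=\frac1T\sum_{t=1}^T\frac1N\sum_i\mathbb E[a_i(t)]$. Then the pair (uniform $\mathbf p$, uniform $\mathbf q$) minimizes $\Delta^{\mathbf p,\mathbf q,\sigma'}$ over all pmfs $\mathbf p$ on the users and $\mathbf q$ on the sub-carriers.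
   Context: The expectation is over both the BS's and the adversary's randomness. *)

theory Defs
  imports "HOL-Probability.Probability"
begin

text \<open>Outcome of one slot: (user chosen by BS, sub-carrier chosen by BS,
  sub-carrier blocked by adversary (None = nothing blocked)).\<close>
type_synonym slot_outcome = "nat \<times> nat \<times> nat option"

definition attacked_slot :: "real \<Rightarrow> nat \<Rightarrow> nat \<Rightarrow> bool" where
  "attacked_slot \<alpha> T t \<longleftrightarrow>
     (1 - \<alpha>) * real T / 2 + 1 \<le> real t \<and> real t \<le> (1 + \<alpha>) * real T / 2"

definition slot_pmf ::
  "nat pmf \<Rightarrow> nat pmf \<Rightarrow> nat \<Rightarrow> real \<Rightarrow> nat \<Rightarrow> nat \<Rightarrow> slot_outcome pmf" where
  "slot_pmf p q Nsub \<alpha> T t =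
     do { u \<leftarrow> p; c \<leftarrow> q;
          b \<leftarrow> (if attacked_slot \<alpha> T t then map_pmf Some (pmf_of_set {..<Nsub})
                else return_pmf None);
          return_pmf (u, c, b) }"

definition outcome_pmf ::
  "nat pmf \<Rightarrow> nat pmf \<Rightarrow> nat \<Rightarrow> real \<Rightarrow> nat \<Rightarrow> (nat \<Rightarrow> slot_outcome) pmf" where
  "outcome_pmf p q Nsub \<alpha> T = Pi_pmf {1..T} (0, 0, None) (\<lambda>t. slot_pmf p q Nsub \<alpha> T t)"

definition success :: "(nat \<Rightarrow> slot_outcome) \<Rightarrow> nat \<Rightarrow> nat \<Rightarrow> bool" where
  "success \<omega> i t \<longleftrightarrow> fst (\<omega> t) = i \<and> snd (snd (\<omega> t)) \<noteq> Some (fst (snd (\<omega> t)))"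

text \<open>Age a_i(t) for t \<ge> 1 (value at t = 0 is an unused convention).\<close>
fun age :: "(nat \<Rightarrow> slot_outcome) \<Rightarrow> nat \<Rightarrow> nat \<Rightarrow> nat" where
  "age \<omega> i 0 = 1"
| "age \<omega> i (Suc 0) = 1"
| "age \<omega> i (Suc (Suc t)) = (if success \<omega> i (Suc t) then 1 else age \<omega> i (Suc t) + 1)"

definition avg_aoi ::
  "nat \<Rightarrow> nat \<Rightarrow> real \<Rightarrow> nat \<Rightarrow> nat pmf \<Rightarrow> nat pmf \<Rightarrow> real" where
  "avg_aoi N Nsub \<alpha> T p q =
     (1 / real T) * (\<Sum>t = 1..T. (1 / real N) * (\<Sum>i<N.
        measure_pmf.expectation (outcome_pmf p q Nsub \<alpha> T) (\<lambda>\<omega>. real (age \<omega> i t))))"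

end

theory Submission
  imports Defs
begin


lemma convex_on_mul_anti:
  fixes S::"real set"
  assumes "convex_on S f" "convex_on S g"
  assumes af: "\<And>x y. x \<in> S \<Longrightarrow> y \<in> S \<Longrightarrow> x \<le> y \<Longrightarrow> f y \<le> f x"
  assumes ag: "\<And>x y. x \<in> S \<Longrightarrow> y \<in> S \<Longrightarrow> x \<le> y \<Longrightarrow> g y \<le> g x"
  assumes fty: "\<And>x. x \<in> S \<Longrightarrow> f x \<ge> 0" and gty: "\<And>x. x \<in> S \<Longrightarrow> g x \<ge> 0"
  shows "convex_on S (\<lambda>x. f x*g x)"
proof (intro convex_on_linorderI)
  show "convex S"
    using assms(1) by (rule convex_on_imp_convex)
  fix t::real and x y
  assume t: "0 < t" "t < 1" and xy: "x \<in> S" "y \<in> S" "x<y"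
  have fxy: "f y \<le> f x" "g y \<le> g x" using af ag xy by auto
  have "0 \<le> (f x - f y) * (g x - g y)" using fxy by simp
  hence "0 \<le> t*(1-t) * ((f x - f y) * (g x - g y))" using t by simp
  hence *: "t*(1-t) * f x * g y + t*(1-t) * f y * g x \<le> t*(1-t) * f x * g x + t*(1-t) * f y * g y"
    by (simp add: algebra_simps)
  have inS: "(1-t)*x + t*y \<in> S"
    using t xy \<open>convex S\<close> by (simp add: convex_alt)
  then have "f ((1-t)*x + t*y) * g ((1-t)*x + t*y) \<le> ((1-t) * f x + t * f y)*g ((1-t)*x + t*y)"
    using convex_onD [OF \<open>convex_on S f\<close>, of t x y] t xy fty gty
    by (intro mult_mono add_nonneg_nonneg) (auto simp: zero_le_mult_iff)
  also have "\<dots> \<le> ((1-t) * f x + t * f y) * ((1-t)*g x + t*g y)"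
    using convex_onD [OF \<open>convex_on S g\<close>, of t x y] t xy fty gty inS
    by (intro mult_mono add_nonneg_nonneg) (auto simp: zero_le_mult_iff)
  also have "\<dots> \<le> (1-t) * (f x*g x) + t * (f y*g y)"
    using * by (simp add: algebra_simps)
  finally show "f ((1-t) *\<^sub>R x + t *\<^sub>R y) * g ((1-t) *\<^sub>R x + t *\<^sub>R y) \<le> (1-t)*(f x*g x) + t*(f y*g y)" 
    by simp
qed

lemma prod_props:
  fixes c :: "nat \<Rightarrow> real"
  assumes "finite S" "\<And>s. 0 \<le> c s" "\<And>s. c s \<le> 1"
  shows "convex_on {0..1} (\<lambda>x. \<Prod>s\<in>S. (1 - x * c s))
       \<and> (\<forall>x\<in>{0..1}. \<forall>y\<in>{0..1}. x \<le> y \<longrightarrow> (\<Prod>s\<in>S. (1 - y * c s)) \<le> (\<Prod>s\<in>S. (1 - x * c s)))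
       \<and> (\<forall>x\<in>{0..1}. 0 \<le> (\<Prod>s\<in>S. (1 - x * c s)))"
  using assms(1)
proof (induction S rule: finite_induct)
  case empty
  then show ?case by (simp add: convex_on_const)
next
  case (insert a S)
  have lin: "convex_on {0..1::real} (\<lambda>x. 1 - x * c a)"
    by (rule convex_onI) (auto simp: algebra_simps)
  have nn: "\<And>x::real. x \<in> {0..1} \<Longrightarrow> 0 \<le> 1 - x * c a"
    using assms(2,3)[of a] by (auto intro: mult_le_one)
  have mo: "\<And>x y::real. x \<le> y \<Longrightarrow> 1 - y * c a \<le> 1 - x * c a"
    using assms(2)[of a] by (simp add: mult_right_mono)
  from insert.hyps have pi: "\<And>x. (\<Prod>s\<in>insert a S. (1 - x * c s)) = (1 - x * c a) * (\<Prod>s\<in>S. (1 - x * c s))"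
    by simp
  have IH: "convex_on {0..1} (\<lambda>x. \<Prod>s\<in>S. (1 - x * c s))"
    "\<And>x y. x \<in> {0..1} \<Longrightarrow> y \<in> {0..1} \<Longrightarrow> x \<le> y \<Longrightarrow> (\<Prod>s\<in>S. (1 - y * c s)) \<le> (\<Prod>s\<in>S. (1 - x * c s))"
    "\<And>x. x \<in> {0..1} \<Longrightarrow> 0 \<le> (\<Prod>s\<in>S. (1 - x * c s))"
    using insert.IH by auto
  show ?case unfolding pi
  proof (intro conjI ballI impI)
    show "convex_on {0..1} (\<lambda>x. (1 - x * c a) * (\<Prod>s\<in>S. (1 - x * c s)))"
      by (rule convex_on_mul_anti[OF lin IH(1)]) (use nn mo IH in auto)
    fix x y :: real assume "x \<in> {0..1}" "y \<in> {0..1}" "x \<le> y"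
    then show "(1 - y * c a) * (\<Prod>s\<in>S. (1 - y * c s)) \<le> (1 - x * c a) * (\<Prod>s\<in>S. (1 - x * c s))"
      using nn mo IH by (intro mult_mono) auto
  next
    fix x :: real assume "x \<in> {0..1}"
    then show "0 \<le> (1 - x * c a) * (\<Prod>s\<in>S. (1 - x * c s))"
      using nn IH by simp
  qed
qed



definition Xs :: "nat \<Rightarrow> slot_outcome set" where
  "Xs i = {v. fst v = i \<and> snd (snd v) \<noteq> Some (fst (snd v))}"

definition cc :: "nat \<Rightarrow> real \<Rightarrow> nat \<Rightarrow> nat \<Rightarrow> real" where
  "cc n \<alpha> T t = (if attacked_slot \<alpha> T t then 1 - 1 / real n else 1)"

lemma meas_block:
  assumes "set_pmf q \<subseteq> {..<n}" "n > 0"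
  shows "measure (pair_pmf q (map_pmf Some (pmf_of_set {..<n}))) {(c,b). b = Some c} = 1 / real n"
proof -
  let ?U = "pmf_of_set {..<n::nat}"
  let ?E = "{(c::nat,b). b = Some c}"
  have "emeasure (pair_pmf q (map_pmf Some ?U)) ?E
      = (\<integral>\<^sup>+ x. indicator ?E x \<partial>(pair_pmf q (map_pmf Some ?U)))"
    by (rule nn_integral_indicator[symmetric]) simp
  also have "\<dots> = (\<integral>\<^sup>+ c. \<integral>\<^sup>+ b. indicator ?E (c,b) \<partial>(map_pmf Some ?U) \<partial>q)"
    by (rule nn_integral_pair_pmf')
  also have "\<dots> = (\<integral>\<^sup>+ c. ennreal (1 / real n) \<partial>q)"
  proof (intro nn_integral_cong_AE AE_pmfI)
    fix c assume "c \<in> set_pmf q"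
    then have cn: "c < n" using assms by auto
    have "(\<integral>\<^sup>+ b. indicator ?E (c,b) \<partial>(map_pmf Some ?U)) = (\<integral>\<^sup>+ x. indicator {c} x \<partial>?U)"
      by (simp add: indicator_def)
    also have "\<dots> = emeasure ?U {c}" by simp
    also have "\<dots> = ennreal (1 / real n)"
    proof -
      have "pmf ?U c = 1 / real n" using cn assms(2) by (subst pmf_of_set) auto
      then show ?thesis by (simp add: emeasure_pmf_single)
    qed
    finally show "(\<integral>\<^sup>+ b. indicator ?E (c,b) \<partial>(map_pmf Some ?U)) = ennreal (1 / real n)" .
  qed
  also have "\<dots> = ennreal (1 / real n)"
    by (simp add: measure_pmf.emeasure_space_1)
  finally show ?thesis
    by (simp add: measure_pmf.emeasure_eq_measure)
qed

lemma slot_meas: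
  assumes "set_pmf q \<subseteq> {..<n}" "n > 0"
  shows "measure (slot_pmf p q n \<alpha> T t) (Xs i) = pmf p i * cc n \<alpha> T t"
proof -
  define B where "B = (if attacked_slot \<alpha> T t then map_pmf Some (pmf_of_set {..<n}) else return_pmf None)"
  have sp: "slot_pmf p q n \<alpha> T t = pair_pmf p (pair_pmf q B)"
    unfolding slot_pmf_def pair_pmf_def B_def by (simp add: bind_assoc_pmf bind_return_pmf)
  define Y where "Y = {(c::nat, b::nat option). b \<noteq> Some c}"
  have X: "Xs i = {i} \<times> Y" by (auto simp: Xs_def Y_def)
  have "measure (pair_pmf q B) Y = cc n \<alpha> T t"
  proof (cases "attacked_slot \<alpha> T t")
    case True
    have "Y = space (measure_pmf (pair_pmf q B)) - {(c,b). b = Some c}"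
      by (auto simp: Y_def)
    then have "measure (pair_pmf q B) Y = 1 - measure (pair_pmf q B) {(c,b). b = Some c}"
      using measure_pmf.prob_compl[of "{(c,b). b = Some c}" "pair_pmf q B"] by simp
    then show ?thesis using True meas_block[OF assms] by (simp add: B_def cc_def)
  next
    case False
    then show ?thesis by (simp add: B_def cc_def pair_return_pmf2 Y_def)
  qed
  then show ?thesis
    unfolding sp X by (simp add: measure_pmf_prob_product measure_pmf_single)
qed

lemma slot_exp:
  assumes "set_pmf q \<subseteq> {..<n}" "n > 0"
  shows "measure_pmf.expectation (slot_pmf p q n \<alpha> T t) (\<lambda>v. 1 - indicator (Xs i) v)
     = 1 - pmf p i * cc n \<alpha> T t"
  using slot_meas[OF assms, of p \<alpha> T t i]
  by (subst Bochner_Integration.integral_diff)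
     (auto intro!: measure_pmf.integrable_const_bound[where B=1])



lemma age_formula:
  "real (age \<omega> i (Suc t)) = 1 + (\<Sum>j\<in>{1..<Suc t}. \<Prod>s\<in>{j..<Suc t}. (1 - indicator (Xs i) (\<omega> s)))"
proof (induction t)
  case 0
  then show ?case by simp
next
  case (Suc t)
  have succ: "success \<omega> i (Suc t) \<longleftrightarrow> \<omega> (Suc t) \<in> Xs i" by (simp add: success_def Xs_def)
  let ?f = "\<lambda>s. 1 - indicator (Xs i) (\<omega> s) :: real"
  have "(\<Sum>j\<in>{1..<Suc (Suc t)}. \<Prod>s\<in>{j..<Suc (Suc t)}. ?f s)
      = (\<Sum>j\<in>{1..<Suc t}. \<Prod>s\<in>{j..<Suc (Suc t)}. ?f s) + ?f (Suc t)"
    by (simp add: sum.op_ivl_Suc)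
  also have "(\<Sum>j\<in>{1..<Suc t}. \<Prod>s\<in>{j..<Suc (Suc t)}. ?f s)
      = (\<Sum>j\<in>{1..<Suc t}. (\<Prod>s\<in>{j..<Suc t}. ?f s) * ?f (Suc t))"
    by (intro sum.cong refl) (simp add: prod.op_ivl_Suc)
  also have "(\<Sum>j\<in>{1..<Suc t}. (\<Prod>s\<in>{j..<Suc t}. ?f s) * ?f (Suc t))
      = (\<Sum>j\<in>{1..<Suc t}. (\<Prod>s\<in>{j..<Suc t}. ?f s)) * ?f (Suc t)"
    by (rule sum_distrib_right[symmetric])
  also have "\<And>S f::real. S * f + f = f * (1 + S)" by algebra
  finally have eq: "(\<Sum>j\<in>{1..<Suc (Suc t)}. \<Prod>s\<in>{j..<Suc (Suc t)}. ?f s)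
      = ?f (Suc t) * (1 + (\<Sum>j\<in>{1..<Suc t}. \<Prod>s\<in>{j..<Suc t}. ?f s))" .
  show ?case
    unfolding eq using Suc.IH by (simp add: succ)
qed

lemma int_bdd:
  fixes f :: "'a \<Rightarrow> real"
  assumes "\<And>x. \<bar>f x\<bar> \<le> B"
  shows "integrable (measure_pmf M) f"
  by (rule measure_pmf.integrable_const_bound[where B=B]) (use assms in auto)

lemma prod_fail_bdd:
  "\<bar>\<Prod>s\<in>S. (1 - indicator A (\<omega> s) :: real)\<bar> \<le> 1"
proof -
  have "\<bar>\<Prod>s\<in>S. (1 - indicator A (\<omega> s) :: real)\<bar> = (\<Prod>s\<in>S. \<bar>1 - indicator A (\<omega> s) :: real\<bar>)"
    by (simp add: abs_prod)
  also have "\<dots> \<le> 1"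
    by (intro prod_le_1) (auto simp: indicator_def)
  finally show ?thesis .
qed

lemma exp_prod:
  assumes "1 \<le> j" "t \<le> Suc T" "set_pmf q \<subseteq> {..<n}" "n > 0"
  shows "measure_pmf.expectation (outcome_pmf p q n \<alpha> T)
           (\<lambda>\<omega>. \<Prod>s\<in>{j..<t}. (1 - indicator (Xs i) (\<omega> s)))
       = (\<Prod>s\<in>{j..<t}. (1 - pmf p i * cc n \<alpha> T s))"
proof -
  define F where "F = (\<lambda>s v. if s \<in> {j..<t} then 1 - indicator (Xs i) v else (1::real))"
  have sub: "{j..<t} \<subseteq> {1..T}" using assms by auto
  have "\<And>\<omega>. (\<Prod>s\<in>{j..<t}. (1 - indicator (Xs i) (\<omega> s))) = (\<Prod>s\<in>{1..T}. F s (\<omega> s))"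
    unfolding F_def using sub by (intro prod.mono_neutral_cong_left) auto
  then have "measure_pmf.expectation (outcome_pmf p q n \<alpha> T)
           (\<lambda>\<omega>. \<Prod>s\<in>{j..<t}. (1 - indicator (Xs i) (\<omega> s)))
      = measure_pmf.expectation (outcome_pmf p q n \<alpha> T) (\<lambda>\<omega>. \<Prod>s\<in>{1..T}. F s (\<omega> s))"
    by simp
  also have "\<dots> = (\<Prod>s\<in>{1..T}. measure_pmf.expectation (slot_pmf p q n \<alpha> T s) (F s))"
    unfolding outcome_pmf_def
    by (rule expectation_prod_Pi_pmf) (auto simp: F_def indicator_def intro!: int_bdd[where B=1])
  also have "\<dots> = (\<Prod>s\<in>{1..T}. (if s \<in> {j..<t} then 1 - pmf p i * cc n \<alpha> T s else 1))"
    by (intro prod.cong refl) (auto simp: F_def slot_exp[OF assms(3,4)])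
  also have "\<dots> = (\<Prod>s\<in>{j..<t}. (1 - pmf p i * cc n \<alpha> T s))"
    using sub by (intro prod.mono_neutral_cong_right) auto
  finally show ?thesis .
qed

definition G :: "nat \<Rightarrow> real \<Rightarrow> nat \<Rightarrow> nat \<Rightarrow> real \<Rightarrow> real" where
  "G n \<alpha> T t x = 1 + (\<Sum>j\<in>{1..<t}. \<Prod>s\<in>{j..<t}. (1 - x * cc n \<alpha> T s))"

lemma exp_age:
  assumes "1 \<le> t" "t \<le> T" "set_pmf q \<subseteq> {..<n}" "n > 0"
  shows "measure_pmf.expectation (outcome_pmf p q n \<alpha> T) (\<lambda>\<omega>. real (age \<omega> i t))
       = G n \<alpha> T t (pmf p i)"
proof -
  obtain t' where t: "t = Suc t'" using assms(1) by (cases t) auto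
  let ?M = "outcome_pmf p q n \<alpha> T"
  have "measure_pmf.expectation ?M (\<lambda>\<omega>. real (age \<omega> i t))
     = measure_pmf.expectation ?M (\<lambda>\<omega>. 1 + (\<Sum>j\<in>{1..<t}. \<Prod>s\<in>{j..<t}. (1 - indicator (Xs i) (\<omega> s))))"
    unfolding t age_formula ..
  also have "\<dots> = 1 + (\<Sum>j\<in>{1..<t}. measure_pmf.expectation ?M (\<lambda>\<omega>. \<Prod>s\<in>{j..<t}. (1 - indicator (Xs i) (\<omega> s))))"
    apply (subst Bochner_Integration.integral_add)
      apply (auto intro!: int_bdd[where B=1] Bochner_Integration.integrable_sum prod_fail_bdd)[2]
    apply (subst Bochner_Integration.integral_sum)
     apply (auto intro!: int_bdd[where B=1] prod_fail_bdd)
    done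
  also have "\<dots> = G n \<alpha> T t (pmf p i)"
    unfolding G_def using assms by (simp add: exp_prod)
  finally show ?thesis .
qed



lemma G_convex:
  assumes "n > 0"
  shows "convex_on {0..1} (G n \<alpha> T t)"
proof -
  have c: "\<And>s. 0 \<le> cc n \<alpha> T s" "\<And>s. cc n \<alpha> T s \<le> 1"
    using assms by (auto simp: cc_def)
  have "convex_on {0..1::real} (\<lambda>x. \<Sum>j\<in>J. \<Prod>s\<in>{j..<t}. (1 - x * cc n \<alpha> T s))" if "finite J" for J
    using that
  proof (induction J rule: finite_induct)
    case empty then show ?case by (simp add: convex_on_const)
  next
    case (insert a J)
    then show ?case
      using prod_props[of "{a..<t}" "cc n \<alpha> T", OF _ c] by (auto intro!: convex_on_add)
  qed
  then have "convex_on {0..1::real} (\<lambda>x. 1 + (\<Sum>j\<in>{1..<t}. \<Prod>s\<in>{j..<t}. (1 - x * cc n \<alpha> T s)))"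
    by (intro convex_on_add) (auto simp: convex_on_const)
  then show ?thesis unfolding G_def[abs_def] by simp
qed

lemma jensen_step:
  assumes "N \<ge> 1" "n > 0" "set_pmf p \<subseteq> {..<N}"
  shows "(\<Sum>i<N. G n \<alpha> T t (1 / real N)) \<le> (\<Sum>i<N. G n \<alpha> T t (pmf p i))"
proof -
  have s1: "(\<Sum>i<N. pmf p i) = 1" using assms(3) by (intro sum_pmf_eq_1) auto
  have "G n \<alpha> T t (\<Sum>i<N. (1 / real N) *\<^sub>R pmf p i) \<le> (\<Sum>i<N. (1 / real N) * G n \<alpha> T t (pmf p i))"
    using assms by (intro convex_on_sum[OF _ _ G_convex]) (auto simp: pmf_le_1 lessThan_empty_iff)
  moreover have "(\<Sum>i<N. (1 / real N) *\<^sub>R pmf p i) = 1 / real N"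
    using s1 by (simp add: sum_divide_distrib[symmetric])
  ultimately have "G n \<alpha> T t (1 / real N) \<le> (1 / real N) * (\<Sum>i<N. G n \<alpha> T t (pmf p i))"
    by (simp add: sum_distrib_left)
  then have "real N * G n \<alpha> T t (1 / real N) \<le> (\<Sum>i<N. G n \<alpha> T t (pmf p i))"
    using assms(1) by (simp add: field_simps)
  then show ?thesis by simp
qed

lemma avg_formula:
  assumes "set_pmf q \<subseteq> {..<n}" "n > 0"
  shows "avg_aoi N n \<alpha> T p q = (1 / real T) * (\<Sum>t = 1..T. (1 / real N) * (\<Sum>i<N. G n \<alpha> T t (pmf p i)))"
  unfolding avg_aoi_def using assms by (intro arg_cong2[where f="(*)"] refl sum.cong) (auto simp: exp_age)

theorem theorem12:
  fixes N Nsub T :: nat and \<alpha> :: real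
  assumes "N \<ge> 1" and "Nsub \<ge> 2"
    and "0 < \<alpha>" and "\<alpha> < 1"
    and "\<alpha> * real T \<in> \<int>"
    and "\<exists>k::nat. (1 - \<alpha>) * real T = 2 * real k"
  shows "\<forall>p q. set_pmf p \<subseteq> {..<N} \<longrightarrow> set_pmf q \<subseteq> {..<Nsub} \<longrightarrow>
           avg_aoi N Nsub \<alpha> T (pmf_of_set {..<N}) (pmf_of_set {..<Nsub})
             \<le> avg_aoi N Nsub \<alpha> T p q"
proof (intro allI impI)
  fix p q :: "nat pmf"
  assume p: "set_pmf p \<subseteq> {..<N}" and q: "set_pmf q \<subseteq> {..<Nsub}"
  have n0: "Nsub > 0" using assms(2) by simp
  have N0: "{..<N} \<noteq> {}" "{..<Nsub} \<noteq> {}" using assms(1,2) by (auto simp: lessThan_empty_iff)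
  have qu: "set_pmf (pmf_of_set {..<Nsub}) \<subseteq> {..<Nsub}" using N0 by simp
  have pu: "\<And>i. i \<in> {..<N} \<Longrightarrow> pmf (pmf_of_set {..<N}) i = 1 / real N"
    using N0 by (subst pmf_of_set) auto
  have "avg_aoi N Nsub \<alpha> T (pmf_of_set {..<N}) (pmf_of_set {..<Nsub})
      = (1 / real T) * (\<Sum>t = 1..T. (1 / real N) * (\<Sum>i<N. G Nsub \<alpha> T t (1 / real N)))"
    unfolding avg_formula[OF qu n0] by (simp add: pu)
  also have "\<dots> \<le> (1 / real T) * (\<Sum>t = 1..T. (1 / real N) * (\<Sum>i<N. G Nsub \<alpha> T t (pmf p i)))"
    by (intro mult_left_mono sum_mono jensen_step[OF assms(1) n0 p]) auto
  also have "\<dots> = avg_aoi N Nsub \<alpha> T p q"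
    unfolding avg_formula[OF q n0] ..
  finally show "avg_aoi N Nsub \<alpha> T (pmf_of_set {..<N}) (pmf_of_set {..<Nsub}) \<le> avg_aoi N Nsub \<alpha> T p q" .
qed

end
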